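(* In the setting and notation described in the context (GKSM iteration), assume in addition that the stepsizes satisfy $0<\alpha_{\min}\le\alpha_k\le\alpha_{\max}<\frac{2\underline{\eta}}{\underline{\eta}+L}$ for all $k$, and put $\upsilon:=\frac{\underline{\eta}}{\alpha_{\max}}-\frac{\underline{\eta}+L}{2}>0$ and $\Delta_k:=\min_{1\le k'\le k}\|\mathbf{x}_{k'+1}-\mathbf{x}_{k'}\|_2^2$. Then, for any $K\in\{1,2,\dots\}\cup\{+\infty\}$ and all $k\ge1$: (i) $F(\mathbf{x}_{k+1})\le F(\mathbf{x}_k)$; (ii) $\Delta_k\le \dfrac{F(\mathbf{x}_1)-F^*}{\upsilon\,k}$, where $F^*=\inf_{\mathbf{x}\in\mathcal C}F(\mathbf{x})$; (iii) $\|\mathbf{x}_{k+1}-\mathbf{x}_k\|\to0$ as $k\to\infty$.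
   Context: Setting. Identify $\mathbb C^N$ with $\mathbb R^{2N}$ equipped with the real inner product $\mathrm{Re}\langle\mathbf u,\mathbf v\rangle$, where $\langle\mathbf u,\mathbf v\rangle=\mathbf u^{H}\mathbf v$ ($^H$ = conjugate transpose); all gradients are taken with respect to this inner product. Let $\mathbf A\in\mathbb C^{m\times N}$, $\mathbf y\in\mathbb C^m$ with $\mathbf A^H\mathbf y\neq\mathbf 0$, and $h(\mathbf x)=\frac12\|\mathbf A\mathbf x-\mathbf y\|_2^2$ (so $\nabla h(\mathbf x)=\mathbf A^H(\mathbf A\mathbf x-\mathbf y)$). Let $f:\mathbb C^N\to\mathbb R$ be differentiable and bounded below, with $\nabla f$ $L$-Lipschitz ($L>0$): $\|\nabla f(\mathbf x_1)-\nabla f(\mathbf x_2)\|\le L\|\mathbf x_1-\mathbf x_2\|$. Let $\mathcal C\subseteq\mathbb C^N$ be nonempty, closed and convex, $\iota_{\mathcal C}$ its indicator function ($0$ on $\mathcal C$, $+\infty$ outside), $F=h+f$, $F_{\mathcal C}=F+\iota_{\mathcal C}$, and $\|\mathbf x\|_{\mathbf M}^2=\mathbf x^H\mathbf M\mathbf x$. GKSM iteration. Fix $K\in\{1,2,\dots\}\cup\{+\infty\}$, stepsizes $\alpha_k>0$, and Hermitian matrices $\mathbf B_k\in\mathbb C^{N\times N}$ with $\underline{\eta}\,\mathbf I\preceq\mathbf B_k\preceq\overline{\eta}\,\mathbf I$ for all $k$, where $0<\underline{\eta}\le\overline{\eta}<\infty$ (in the paper $\mathbf B_k$ is produced by a modified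 self-scaling Hermitian rank-one quasi-Newton rule whose output satisfies these bounds). Let $\mathbf V_1=\mathbf A^H\mathbf y/\|\mathbf A^H\mathbf y\|$ and choose $\mathbf x_1\in\mathcal C\cap\operatorname{range}(\mathbf V_1)$. For $k=1,2,\dots$: define $\bar F_k(\mathbf x)=h(\mathbf x)+\mathrm{Re}\langle\nabla f(\mathbf x_k),\mathbf x\rangle+\frac{1}{2\alpha_k}\|\mathbf x-\mathbf x_k\|_{\mathbf B_k}^2$; let $\boldsymbol\beta_k$ be the (unique) minimizer of $\boldsymbol\beta\mapsto\bar F_k(\mathbf V_k\boldsymbol\beta)$ over $\{\boldsymbol\beta:\mathbf V_k\boldsymbol\beta\in\mathcal C\}$, and set $\mathbf x_{k+1}=\mathbf V_k\boldsymbol\beta_k$. Then, if $k\le K$: compute $\mathbf r_k=\nabla\bar F_k(\mathbf x_{k+1})=\mathbf A^H(\mathbf A\mathbf x_{k+1}-\mathbf y)+\nabla f(\mathbf x_k)+\alpha_k^{-1}\mathbf B_k(\mathbf x_{k+1}-\mathbf x_k)$ and $\tilde{\mathbf r}_k=(\mathbf I-\mathbf V_k\mathbf V_k^H)\mathbf r_k$; if $\tilde{\mathbf r}_k\ne\mathbf 0$ set $\mathbf V_{k+1}=[\mathbf V_k,\ \tilde{\mathbf r}_k/\|\tilde{\mathbf r}_k\|]$, otherwise $\mathbf V_{k+1}=\mathbf V_k$. If $k>K$: set $\mathbf V_{k+1}=\mathbf I_N$. (Thus every $\mathbf V_k$ has orthonormal columns, $\mathbf V_k^H\mathbf V_k=\mathbf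 I$.) *)

theory Defs
  imports "HOL-Analysis.Analysis" "HOL-Library.Extended_Nat"
begin

text \<open>The HOL-Analysis real inner product on complex ^ 'n is exactly Re(u^H v), and the norm
  is the Euclidean 2-norm.\<close>

definition cinner :: "complex ^ 'n \<Rightarrow> complex ^ 'n \<Rightarrow> complex" where
  "cinner u v = (\<Sum>i\<in>UNIV. cnj (u $ i) * v $ i)"

definition cadj :: "complex ^ 'n ^ 'm \<Rightarrow> complex ^ 'm ^ 'n" where
  "cadj M = (\<chi> i j. cnj (M $ j $ i))"

definition cscale :: "complex \<Rightarrow> complex ^ 'n \<Rightarrow> complex ^ 'n" where
  "cscale c v = (\<chi> i. c * v $ i)"

text \<open>A matrix with orthonormal columns is represented by the list of its columns;
  V \<beta> is the linear combination of the columns with coefficients \<beta>.\<close>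
definition colsmul :: "(complex ^ 'n) list \<Rightarrow> (nat \<Rightarrow> complex) \<Rightarrow> complex ^ 'n" where
  "colsmul Vs \<beta> = (\<Sum>j<length Vs. cscale (\<beta> j) (Vs ! j))"

definition projout :: "(complex ^ 'n) list \<Rightarrow> complex ^ 'n \<Rightarrow> complex ^ 'n" where
  "projout Vs r = r - (\<Sum>j<length Vs. cscale (cinner (Vs ! j) r) (Vs ! j))"

definition id_cols :: "(complex ^ ('n::finite)) list" where
  "id_cols = map (\<lambda>j. axis j 1) (SOME l. distinct l \<and> set l = (UNIV :: 'n set))"

definition hermitian :: "complex ^ 'n ^ 'n \<Rightarrow> bool" where
  "hermitian M \<longleftrightarrow> cadj M = M"

definition hfun :: "complex ^ 'n ^ 'm \<Rightarrow> complex ^ 'm \<Rightarrow> complex ^ 'n \<Rightarrow> real" where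
  "hfun A y x = (1/2) * (norm (A *v x - y))\<^sup>2"

definition Fbar :: "complex ^ 'n ^ 'm \<Rightarrow> complex ^ 'm \<Rightarrow> (complex ^ 'n \<Rightarrow> complex ^ 'n)
    \<Rightarrow> real \<Rightarrow> complex ^ 'n ^ 'n \<Rightarrow> complex ^ 'n \<Rightarrow> complex ^ 'n \<Rightarrow> real" where
  "Fbar A y gf a B xk x = hfun A y x + Re (cinner (gf xk) x)
      + (1 / (2 * a)) * Re (cinner (x - xk) (B *v (x - xk)))"

text \<open>The GKSM iteration: x, V are the iterate and basis sequences (indexed from 1).\<close>
definition gksm :: "complex ^ 'n ^ 'm \<Rightarrow> complex ^ 'm \<Rightarrow> (complex ^ 'n \<Rightarrow> complex ^ 'n)
    \<Rightarrow> (complex ^ 'n) set \<Rightarrow> enat \<Rightarrow> (nat \<Rightarrow> real) \<Rightarrow> (nat \<Rightarrow> complex ^ 'n ^ 'n)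
    \<Rightarrow> (nat \<Rightarrow> complex ^ ('n::finite)) \<Rightarrow> (nat \<Rightarrow> (complex ^ 'n) list) \<Rightarrow> bool" where
  "gksm A y gf C K \<alpha> B x V \<longleftrightarrow>
     V 1 = [scaleR (inverse (norm (cadj A *v y))) (cadj A *v y)]
   \<and> x 1 \<in> C \<and> (\<exists>\<beta>. x 1 = colsmul (V 1) \<beta>)
   \<and> (\<forall>k\<ge>1.
        (\<exists>\<beta>. x (k+1) = colsmul (V k) \<beta>) \<and> x (k+1) \<in> C
      \<and> (\<forall>\<beta>. colsmul (V k) \<beta> \<in> C \<longrightarrow>
            Fbar A y gf (\<alpha> k) (B k) (x k) (x (k+1))
              \<le> Fbar A y gf (\<alpha> k) (B k) (x k) (colsmul (V k) \<beta>))
      \<and> (enat k \<le> K \<longrightarrow>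
           (let r = cadj A *v (A *v x (k+1) - y) + gf (x k)
                    + scaleR (inverse (\<alpha> k)) (B k *v (x (k+1) - x k));
                rt = projout (V k) r
            in V (k+1) = (if rt \<noteq> 0 then V k @ [scaleR (inverse (norm rt)) rt] else V k)))
      \<and> (\<not> enat k \<le> K \<longrightarrow> V (k+1) = id_cols))"

end

theory Submission
  imports Defs
begin


lemma Re_cinner: "Re (cinner u v) = inner u v"
  by (simp add: cinner_def inner_vec_def inner_complex_def Re_sum)

lemma mv_scaleR: "(M::complex^'n^'m) *v (c *\<^sub>R v) = c *\<^sub>R (M *v v)"
  by (simp add: vec_eq_iff matrix_vector_mult_def vector_scaleR_component scaleR_sum_right algebra_simps)

lemma mv_diff: "(M::complex^'n^'m) *v (u - v) = M *v u - M *v v"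
  by (simp add: vec_eq_iff matrix_vector_mult_def sum_subtractf algebra_simps)

lemma colsmul_comb:
  "colsmul Vs (\<lambda>j. complex_of_real a * \<beta> j + complex_of_real b * \<gamma> j)
     = a *\<^sub>R colsmul Vs \<beta> + b *\<^sub>R colsmul Vs \<gamma>"
  unfolding colsmul_def cscale_def
  by (simp add: vec_eq_iff sum_distrib_left sum.distrib scaleR_sum_right)
     (simp add: sum_component scaleR_conv_of_real sum_distrib_left sum.distrib algebra_simps)

lemma colsmul_append:
  "colsmul (Vs @ [w]) (\<lambda>j. if j < length Vs then \<beta> j else 0) = colsmul Vs \<beta>"
  by (simp add: colsmul_def cscale_def nth_append vec_eq_iff)

lemma colsmul_id_cols: "\<exists>\<beta>. z = colsmul (id_cols :: (complex^('n::finite)) list) \<beta>"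
proof -
  define l where "l = (SOME l. distinct l \<and> set l = (UNIV :: 'n set))"
  have ex: "\<exists>l. distinct l \<and> set l = (UNIV :: 'n set)"
    using finite_distinct_list[of "UNIV::'n set"] by auto
  have l: "distinct l" "set l = UNIV" using someI_ex[OF ex] unfolding l_def by auto
  have "colsmul (id_cols :: (complex^'n) list) (\<lambda>i. z $ (l ! i))
      = (\<Sum>i<length l. cscale (z $ (l!i)) (axis (l!i) 1))"
    by (simp add: colsmul_def id_cols_def l_def)
  also have "\<dots> = sum_list (map (\<lambda>j. cscale (z $ j) (axis j 1)) l)"
    by (simp add: sum_list_sum_nth atLeast0LessThan)
  also have "\<dots> = (\<Sum>j\<in>UNIV. cscale (z $ j) (axis j 1))"
    using l by (simp add: sum_list_distinct_conv_sum_set)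
  also have "\<dots> = z"
    by (simp add: vec_eq_iff cscale_def axis_def sum_component if_distrib cong: if_cong)
  finally show ?thesis by metis
qed

lemma mv_add: "(M::complex^'n^'m) *v (u + v) = M *v u + M *v v"
  by (rule matrix_vector_right_distrib)

lemma quad_gen:
  fixes p q :: "'a::real_inner" and P Q :: "'a \<Rightarrow> 'a"
  shows "inner ((1-t) *\<^sub>R p + t *\<^sub>R q) ((1-t) *\<^sub>R P' + t *\<^sub>R Q')
     = (1-t) * inner p P' + t * inner q Q' - t*(1-t) * inner (p - q) (P' - Q')"
  by (simp add: inner_add_left inner_add_right inner_diff_left inner_diff_right algebra_simps)

lemma Fbar_comb:
  "Fbar A y gf a B xk ((1-t) *\<^sub>R u + t *\<^sub>R v)
    = (1-t) * Fbar A y gf a B xk u + t * Fbar A y gf a B xk v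
      - t*(1-t) * ((1/2) * (norm (A *v (u - v)))\<^sup>2 + (1/(2*a)) * inner (u-v) (B *v (u-v)))"
proof -
  have e1: "A *v ((1-t) *\<^sub>R u + t *\<^sub>R v) - y = (1-t) *\<^sub>R (A *v u - y) + t *\<^sub>R (A *v v - y)"
    by (simp add: mv_add mv_scaleR algebra_simps)
  have e2: "(1-t) *\<^sub>R u + t *\<^sub>R v - xk = (1-t) *\<^sub>R (u - xk) + t *\<^sub>R (v - xk)"
    by (simp add: algebra_simps)
  have e3: "B *v ((1-t) *\<^sub>R (u - xk) + t *\<^sub>R (v - xk)) = (1-t) *\<^sub>R (B *v (u - xk)) + t *\<^sub>R (B *v (v - xk))"
    by (simp add: mv_add mv_scaleR)
  have e4: "A *v u - y - (A *v v - y) = A *v (u - v)" by (simp add: mv_diff)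
  have e5: "u - xk - (v - xk) = u - v" by simp
  have e6: "B *v (u - xk) - B *v (v - xk) = B *v (u - v)" by (simp add: mv_diff[symmetric])
  have q1: "inner ((1-t) *\<^sub>R (A *v u - y) + t *\<^sub>R (A *v v - y)) ((1-t) *\<^sub>R (A *v u - y) + t *\<^sub>R (A *v v - y))
     = (1-t) * inner (A *v u - y) (A *v u - y) + t * inner (A *v v - y) (A *v v - y) - t*(1-t) * inner (A *v (u - v)) (A *v (u - v))"
    using quad_gen[of t "A *v u - y" "A *v v - y" "A *v u - y" "A *v v - y"] e4 by simp
  have q2: "inner ((1-t) *\<^sub>R (u - xk) + t *\<^sub>R (v - xk)) ((1-t) *\<^sub>R (B *v (u - xk)) + t *\<^sub>R (B *v (v - xk)))
     = (1-t) * inner (u - xk) (B *v (u - xk)) + t * inner (v - xk) (B *v (v - xk)) - t*(1-t) * inner (u - v) (B *v (u - v))"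
    using quad_gen[of t "u - xk" "v - xk" "B *v (u - xk)" "B *v (v - xk)"] e5 e6 by simp
  have l: "inner (gf xk) ((1-t) *\<^sub>R u + t *\<^sub>R v) = (1-t) * inner (gf xk) u + t * inner (gf xk) v"
    by (simp add: inner_add_right)
  have aux: "\<And>P Q R g1 g2 c S T W::real. (1/2)*((1-t)*P + t*Q - t*(1-t)*R) + ((1-t)*g1 + t*g2) + c*((1-t)*S + t*T - t*(1-t)*W)
     = (1-t)*((1/2)*P + g1 + c*S) + t*((1/2)*Q+g2+c*T) - t*(1-t)*((1/2)*R + c*W)"
    by (simp add: field_simps)
  show ?thesis
    unfolding Fbar_def hfun_def Re_cinner power2_norm_eq_inner e1 e2 e3 q1 q2 l
    by (rule aux)
qed

lemma min_quad:
  fixes D Q :: real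
  assumes "\<And>t. 0 < t \<Longrightarrow> t \<le> 1 \<Longrightarrow> (1-t) * Q \<le> D"
  shows "Q \<le> D"
proof (rule ccontr)
  assume c: "\<not> Q \<le> D"
  have "0 \<le> D" using assms[of 1] by simp
  hence Qp: "Q > 0" using c by simp
  define t where "t = (Q - D) / (2*Q)"
  have t0: "0 < t" using c Qp by (simp add: t_def)
  have t1: "t \<le> 1" using Qp \<open>0 \<le> D\<close> c by (simp add: t_def field_simps)
  have "(1-t) * Q = (Q + D)/2" using Qp by (simp add: t_def field_simps)
  with assms[OF t0 t1] c show False by simp
qed

lemma descent:
  fixes f :: "'a::real_inner \<Rightarrow> real"
  assumes grad: "\<And>z. (f has_derivative (\<lambda>h. inner (gf z) h)) (at z)"
    and lip: "\<And>z1 z2. norm (gf z1 - gf z2) \<le> L * norm (z1 - z2)"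
    and L: "L \<ge> 0"
  shows "f (x + d) \<le> f x + inner (gf x) d + L/2 * (norm d)\<^sup>2"
proof -
  define \<phi> where "\<phi> t = f (x + t *\<^sub>R d) - t * inner (gf x) d - L/2 * t^2 * (norm d)\<^sup>2" for t
  define \<phi>' where "\<phi>' t = inner (gf (x + t *\<^sub>R d)) d - inner (gf x) d - L * t * (norm d)\<^sup>2" for t
  have der: "(\<phi> has_real_derivative \<phi>' t) (at t)" for t
  proof -
    have d1: "((\<lambda>t. x + t *\<^sub>R d) has_derivative (\<lambda>h. h *\<^sub>R d)) (at t)"
      by (auto intro!: derivative_eq_intros)
    have "((\<lambda>t. f (x + t *\<^sub>R d)) has_derivative (\<lambda>h. inner (gf (x + t *\<^sub>R d)) (h *\<^sub>R d))) (at t)"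
      using has_derivative_compose[OF d1 grad] by simp
    hence "((\<lambda>t. f (x + t *\<^sub>R d)) has_real_derivative inner (gf (x + t *\<^sub>R d)) d) (at t)"
      unfolding has_field_derivative_def by (simp add: mult.commute[of _ "inner _ d"])
    thus ?thesis unfolding \<phi>_def[abs_def] \<phi>'_def
      by (auto intro!: derivative_eq_intros simp: power2_eq_square algebra_simps)
  qed
  obtain z where z: "0 < z" "z < 1" "\<phi> 1 - \<phi> 0 = (1 - 0) * \<phi>' z"
    using MVT2[of 0 1 \<phi> \<phi>'] der by auto
  have "inner (gf (x + z *\<^sub>R d) - gf x) d \<le> norm (gf (x + z *\<^sub>R d) - gf x) * norm d"
    by (rule norm_cauchy_schwarz)
  also have "\<dots> \<le> L * norm (z *\<^sub>R d) * norm d"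
    using lip[of "x + z *\<^sub>R d" x] by (simp add: mult_right_mono)
  also have "\<dots> = L * z * (norm d)\<^sup>2" using z by (simp add: power2_eq_square)
  finally have "\<phi>' z \<le> 0" unfolding \<phi>'_def by (simp add: inner_diff_left)
  with z have "\<phi> 1 \<le> \<phi> 0" by simp
  thus ?thesis unfolding \<phi>_def by simp
qed



theorem theorem1:
  fixes A :: "complex ^ 'n::finite ^ 'm::finite" and y :: "complex ^ 'm"
    and f :: "complex ^ 'n \<Rightarrow> real" and gf :: "complex ^ 'n \<Rightarrow> complex ^ 'n"
    and L :: real and C :: "(complex ^ 'n) set" and K :: enat
    and \<alpha> :: "nat \<Rightarrow> real" and B :: "nat \<Rightarrow> complex ^ 'n ^ 'n"
    and eta_lo eta_hi alpha_min alpha_max :: real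
    and x :: "nat \<Rightarrow> complex ^ 'n" and V :: "nat \<Rightarrow> (complex ^ 'n) list"
  assumes Aty: "cadj A *v y \<noteq> 0"
    and f_grad: "\<And>z. (f has_derivative (\<lambda>h. inner (gf z) h)) (at z)"
    and f_bdd: "bdd_below (range f)"
    and L_pos: "L > 0"
    and f_lip: "\<And>z1 z2. norm (gf z1 - gf z2) \<le> L * norm (z1 - z2)"
    and C_ne: "C \<noteq> {}" and C_closed: "closed C" and C_convex: "convex C"
    and eta: "0 < eta_lo" "eta_lo \<le> eta_hi"
    and B_herm: "\<And>k. hermitian (B k)"
    and B_bounds: "\<And>k z. eta_lo * (norm z)\<^sup>2 \<le> Re (cinner z (B k *v z))"
                  "\<And>k z. Re (cinner z (B k *v z)) \<le> eta_hi * (norm z)\<^sup>2"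
    and alpha_bounds: "0 < alpha_min" "\<And>k. alpha_min \<le> \<alpha> k" "\<And>k. \<alpha> k \<le> alpha_max"
                      "alpha_max < 2 * eta_lo / (eta_lo + L)"
    and iter: "gksm A y gf C K \<alpha> B x V"
  shows "(\<forall>k\<ge>1. hfun A y (x (k+1)) + f (x (k+1)) \<le> hfun A y (x k) + f (x k))
       \<and> (\<forall>k\<ge>1. Min ((\<lambda>k'. (norm (x (k'+1) - x k'))\<^sup>2) ` {1..k})
               \<le> (hfun A y (x 1) + f (x 1) - (INF z\<in>C. hfun A y z + f z))
                 / ((eta_lo / alpha_max - (eta_lo + L) / 2) * real k))
       \<and> (\<lambda>k. norm (x (k+1) - x k)) \<longlonglongrightarrow> 0"
proof -
  define F where "F z = hfun A y z + f z" for z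
  define ups where "ups = eta_lo / alpha_max - (eta_lo + L) / 2"
  define g where "g k = (norm (x (k+1) - x k))\<^sup>2" for k
  have apos: "\<And>k. 0 < \<alpha> k" using alpha_bounds(1,2) by (meson less_le_trans)
  have amax: "0 < alpha_max" using apos alpha_bounds(3) by (meson less_le_trans)
  have ups_pos: "ups > 0"
  proof -
    have "alpha_max * (eta_lo + L) < 2 * eta_lo"
      using alpha_bounds(4) eta L_pos by (simp add: pos_less_divide_eq mult.commute)
    hence "(eta_lo + L) / 2 < eta_lo / alpha_max" using amax by (simp add: field_simps)
    thus ?thesis by (simp add: ups_def)
  qed
  note it = iter[unfolded gksm_def]
  have x1C: "x 1 \<in> C" using it by blast
  have xC: "k \<ge> 1 \<Longrightarrow> x k \<in> C" for k
  proof (induction k rule: nat_induct_at_least)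
    case base then show ?case using x1C by simp
  next
    case (Suc n) then show ?case using it by (metis Suc_eq_plus1)
  qed
  have span: "k \<ge> 1 \<Longrightarrow> \<exists>\<beta>. x k = colsmul (V k) \<beta>" for k
  proof (induction k rule: nat_induct_at_least)
    case base then show ?case using it by blast
  next
    case (Suc k)
    obtain \<beta> where b: "x (k+1) = colsmul (V k) \<beta>" using it Suc(1) by blast
    show ?case
    proof (cases "enat k \<le> K")
      case True
      have "\<exists>w. V (k+1) = V k @ [w] \<or> V (k+1) = V k"
      proof -
        have "\<forall>k\<ge>1. enat k \<le> K \<longrightarrow> (\<exists>w. V (k+1) = V k @ [w] \<or> V (k+1) = V k)"
          using it unfolding Let_def by (metis (no_types, lifting))
        thus ?thesis using Suc(1) True by blast
      qed
      then obtain w where "V (k+1) = V k @ [w] \<or> V (k+1) = V k" by blast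
      then show ?thesis using b colsmul_append by (metis Suc_eq_plus1)
    next
      case False
      then have "V (k+1) = id_cols" using it Suc(1) by blast
      then show ?thesis using colsmul_id_cols by (metis Suc_eq_plus1)
    qed
  qed
  have key: "F (x (k+1)) + ups * g k \<le> F (x k)" if k1: "k \<ge> 1" for k
  proof -
    define G where "G = Fbar A y gf (\<alpha> k) (B k) (x k)"
    define d where "d = x (k+1) - x k"
    define Q where "Q = (1/2) * (norm (A *v (x (k+1) - x k)))\<^sup>2
        + (1/(2*\<alpha> k)) * inner (x (k+1) - x k) (B k *v (x (k+1) - x k))"
    obtain \<beta> where b: "x (k+1) = colsmul (V k) \<beta>" using it k1 by blast
    obtain \<gamma> where c: "x k = colsmul (V k) \<gamma>" using span k1 by blast
    have minG: "\<And>\<delta>. colsmul (V k) \<delta> \<in> C \<Longrightarrow> G (x (k+1)) \<le> G (colsmul (V k) \<delta>)"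
      using it k1 unfolding G_def by blast
    have "(1-t) * Q \<le> G (x k) - G (x (k+1))" if t: "0 < t" "t \<le> 1" for t
    proof -
      have zC: "(1-t) *\<^sub>R x (k+1) + t *\<^sub>R x k \<in> C"
        using convexD[OF C_convex xC[of "k+1"] xC[OF k1], of "1-t" t] t k1 by simp
      have "(1-t) *\<^sub>R x (k+1) + t *\<^sub>R x k
          = colsmul (V k) (\<lambda>j. complex_of_real (1-t) * \<beta> j + complex_of_real t * \<gamma> j)"
        using b c colsmul_comb by metis
      hence "G (x (k+1)) \<le> G ((1-t) *\<^sub>R x (k+1) + t *\<^sub>R x k)"
        using minG zC by metis
      also have "\<dots> = (1-t) * G (x (k+1)) + t * G (x k) - t*(1-t)*Q"
        unfolding G_def Q_def by (rule Fbar_comb)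
      finally have "t * ((1-t) * Q) \<le> t * (G (x k) - G (x (k+1)))"
        by (simp add: algebra_simps)
      thus ?thesis using t by simp
    qed
    hence QG: "Q \<le> G (x k) - G (x (k+1))" by (rule min_quad)
    have Bd: "eta_lo * (norm d)\<^sup>2 \<le> inner d (B k *v d)"
      using B_bounds(1)[of d k] by (simp add: Re_cinner)
    have Qlo: "Q \<ge> (1/(2*\<alpha> k)) * (eta_lo * (norm d)\<^sup>2)"
    proof -
      have "1/(2 * \<alpha> k) * (eta_lo * (norm d)\<^sup>2) \<le> 1/(2 * \<alpha> k) * inner d (B k *v d)"
        using Bd apos[of k] by (intro mult_left_mono) auto
      moreover have "0 \<le> 1/2 * (norm (A *v d))\<^sup>2" by simp
      ultimately show ?thesis unfolding Q_def d_def[symmetric] by linarith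
    qed
    have Gk: "G (x k) = hfun A y (x k) + inner (gf (x k)) (x k)"
      unfolding G_def Fbar_def by (simp add: Re_cinner)
    have Gk1: "G (x (k+1)) = hfun A y (x (k+1)) + inner (gf (x k)) (x (k+1))
        + (1/(2*\<alpha> k)) * inner d (B k *v d)"
      unfolding G_def Fbar_def d_def by (simp add: Re_cinner)
    have Gk1': "G (x (k+1)) \<ge> hfun A y (x (k+1)) + inner (gf (x k)) (x (k+1))
        + (1/(2*\<alpha> k)) * (eta_lo * (norm d)\<^sup>2)"
      unfolding Gk1 using Bd apos[of k] by (simp add: divide_right_mono)
    have hstep: "hfun A y (x (k+1)) + inner (gf (x k)) d + (eta_lo / \<alpha> k) * (norm d)\<^sup>2
        \<le> hfun A y (x k)"
      using QG Qlo Gk Gk1' unfolding d_def by (simp add: inner_diff_right field_simps)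
    have desc: "f (x (k+1)) \<le> f (x k) + inner (gf (x k)) d + L/2 * (norm d)\<^sup>2"
      using descent[OF f_grad f_lip, of "x k" d] L_pos unfolding d_def by simp
    have "eta_lo / alpha_max \<le> eta_lo / \<alpha> k"
      using eta apos[of k] alpha_bounds(3)[of k] by (simp add: frac_le)
    moreover have "\<And>p q e::real. p \<le> q \<Longrightarrow> 0 < e \<Longrightarrow> p - (e + L)/2 \<le> q - L/2" by argo
    ultimately have "ups \<le> eta_lo / \<alpha> k - L/2" using eta unfolding ups_def by blast
    hence "ups * (norm d)\<^sup>2 \<le> (eta_lo / \<alpha> k - L/2) * (norm d)\<^sup>2"
      by (simp add: mult_right_mono)
    thus ?thesis using hstep desc unfolding F_def g_def d_def[symmetric]
      by (simp add: algebra_simps)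
  qed
  have gnn: "\<And>k. 0 \<le> g k" by (simp add: g_def)
  have P1: "\<forall>k\<ge>1. F (x (k+1)) \<le> F (x k)"
    using key gnn ups_pos by (smt (verit) mult_nonneg_nonneg)
  obtain b where b: "\<And>z. b \<le> f z" using f_bdd by (auto simp: bdd_below_def)
  have bddF: "bdd_below (F ` C)"
    by (rule bdd_belowI[of _ b]) (auto simp: F_def hfun_def intro: add_nonneg_pos[of 0] b
        add_increasing)
  define Fs where "Fs = (INF z\<in>C. F z)"
  have tele: "ups * (\<Sum>k'\<in>{1..k}. g k') \<le> F (x 1) - F (x (k+1))" for k
  proof (induction k)
    case 0 then show ?case by simp
  next
    case (Suc k)
    have "{1..Suc k} = insert (Suc k) {1..k}" by auto
    hence "(\<Sum>k'\<in>{1..Suc k}. g k') = g (Suc k) + (\<Sum>k'\<in>{1..k}. g k')" by simp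
    with Suc key[of "Suc k"] show ?case by (simp add: algebra_simps)
  qed
  have Fs_le: "Fs \<le> F (x k)" if "k \<ge> 1" for k
    unfolding Fs_def using cINF_lower[OF bddF xC[OF that]] .
  have sumb: "ups * (\<Sum>k'\<in>{1..k}. g k') \<le> F (x 1) - Fs" for k
    using tele[of k] Fs_le[of "k+1"] by simp
  have P2: "\<forall>k\<ge>1. Min (g ` {1..k}) \<le> (F (x 1) - Fs) / (ups * real k)"
  proof (intro allI impI)
    fix k :: nat assume k1: "k \<ge> 1"
    have "(\<Sum>k'\<in>{1..k}. Min (g ` {1..k})) \<le> (\<Sum>k'\<in>{1..k}. g k')"
      by (rule sum_mono) auto
    hence "real k * Min (g ` {1..k}) \<le> (\<Sum>k'\<in>{1..k}. g k')" by simp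
    hence "ups * (real k * Min (g ` {1..k})) \<le> F (x 1) - Fs"
      using sumb[of k] ups_pos by (smt (verit) mult_left_mono)
    moreover have "ups * real k > 0" using ups_pos k1 by simp
    ultimately show "Min (g ` {1..k}) \<le> (F (x 1) - Fs) / (ups * real k)"
      by (simp add: pos_le_divide_eq algebra_simps)
  qed
  have summ: "summable (\<lambda>n. g (Suc n))"
  proof (rule summableI_nonneg_bounded)
    fix n
    have "(\<Sum>k<n. g (Suc k)) = (\<Sum>k'\<in>{1..n}. g k')"
      by (simp add: sum.atLeast1_atMost_eq)
    also have "\<dots> \<le> (F (x 1) - Fs) / ups"
      using sumb[of n] ups_pos by (simp add: pos_le_divide_eq mult.commute)
    finally show "(\<Sum>k<n. g (Suc k)) \<le> (F (x 1) - Fs) / ups" .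
  qed (simp add: gnn)
  have "g \<longlonglongrightarrow> 0"
    using summable_LIMSEQ_zero[OF summ] filterlim_sequentially_Suc by blast
  hence "(\<lambda>k. sqrt (g k)) \<longlonglongrightarrow> 0" using tendsto_real_sqrt by fastforce
  hence P3: "(\<lambda>k. norm (x (k+1) - x k)) \<longlonglongrightarrow> 0" by (simp add: g_def)
  show ?thesis using P1 P2 P3 unfolding F_def Fs_def ups_def g_def by simp
qed

end
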